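(* Let $R=k[x_1,\dots,x_n]$ be a polynomial ring over a field $k$, let $I$ be an unmixed monomial ideal of $R$, let $\mathbf a\in\mathbb{Z}^n$, and let $F\subseteq[n]$ with $G_{\mathbf a}\subseteq F$. Then $F\setminus G_{\mathbf a}$ is a facet of $\Delta_{\mathbf a}(I)$ if and only if $F\in\mathcal F(I)$ and $x^{\mathbf a_+}\notin I_F$.
   Context: An ideal is unmixed if every associated prime is a minimal prime. For $\mathbf a=(a_1,\dots,a_n)\in\mathbb{Z}^n$ write $x^{\mathbf a}=x_1^{a_1}\cdots x_n^{a_n}$, $G_{\mathbf a}=\{i\in[n]\mid a_i<0\}$ with $[n]=\{1,\dots,n\}$, and let $\mathbf a_+$ be obtained from $\mathbf a$ by replacing every negative coordinate by $0$. For $F\subseteq[n]$ let $R_F=R[x_i^{-1}\mid i\in F]$ and let $P_F$ be the ideal generated by the variables $x_i$ with $i\notin F$. The degree complex is $\Delta_{\mathbf a}(I)=\{F\setminus G_{\mathbf a} \mid G_{\mathbf a}\subseteq F\subseteq[n],\ x^{\mathbf a}\notin IR_F\}$, a simplicial complex on $[n]$. $\mathcal F(I)$ is the set of all $F\subseteq[n]$ such that $P_F$ is a minimal prime of $I$, and for $F\in\mathcal F(I)$, $I_F$ denotes the primary component of $I$ associated with $P_F$. *)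

theory Defs
  imports Main "HOL-Library.Poly_Mapping"
begin

(* The polynomial ring R = k[x_i | i in V] over a field k, with a finite type 'v of
  variables (so [n] = UNIV :: 'v set, n = CARD('v)). *)

type_synonym ('v, 'k) mpoly = "('v \<Rightarrow>\<^sub>0 nat) \<Rightarrow>\<^sub>0 'k"

definition mon :: "('v \<Rightarrow>\<^sub>0 nat) \<Rightarrow> ('v, 'k::field) mpoly" where
  "mon e = Poly_Mapping.single e 1"

definition var :: "'v \<Rightarrow> ('v, 'k::field) mpoly" where
  "var i = mon (Poly_Mapping.single i 1)"

definition is_ideal :: "('v, 'k::field) mpoly set \<Rightarrow> bool" where
  "is_ideal I \<longleftrightarrow> 0 \<in> I \<and> (\<forall>f\<in>I. \<forall>g\<in>I. f + g \<in> I) \<and> (\<forall>r. \<forall>f\<in>I. r * f \<in> I)"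

definition ideal_gen :: "('v, 'k::field) mpoly set \<Rightarrow> ('v, 'k) mpoly set" where
  "ideal_gen S = \<Inter>{J. is_ideal J \<and> S \<subseteq> J}"

definition is_prime_ideal :: "('v, 'k::field) mpoly set \<Rightarrow> bool" where
  "is_prime_ideal P \<longleftrightarrow> is_ideal P \<and> P \<noteq> UNIV \<and> (\<forall>f g. f * g \<in> P \<longrightarrow> f \<in> P \<or> g \<in> P)"

definition monomial_ideal :: "('v, 'k::field) mpoly set \<Rightarrow> bool" where
  "monomial_ideal I \<longleftrightarrow> (\<exists>E. I = ideal_gen (mon ` E))"

definition associated_prime :: "('v, 'k::field) mpoly set \<Rightarrow> ('v, 'k) mpoly set \<Rightarrow> bool" where
  "associated_prime I P \<longleftrightarrow> is_prime_ideal P \<and> (\<exists>f. P = {g. g * f \<in> I})"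

definition minimal_prime :: "('v, 'k::field) mpoly set \<Rightarrow> ('v, 'k) mpoly set \<Rightarrow> bool" where
  "minimal_prime I P \<longleftrightarrow> is_prime_ideal P \<and> I \<subseteq> P \<and>
     (\<forall>Q. is_prime_ideal Q \<and> I \<subseteq> Q \<and> Q \<subseteq> P \<longrightarrow> Q = P)"

definition unmixed :: "('v, 'k::field) mpoly set \<Rightarrow> bool" where
  "unmixed I \<longleftrightarrow> (\<forall>P. associated_prime I P \<longrightarrow> minimal_prime I P)"

definition P_ideal :: "'v set \<Rightarrow> ('v, 'k::field) mpoly set" where
  "P_ideal F = ideal_gen (var ` (- F))"

definition Fam :: "('v, 'k::field) mpoly set \<Rightarrow> 'v set set" where
  "Fam I = {F. minimal_prime I (P_ideal F)}"

(* Primary component of I associated with a minimal prime P: the (unique) isolated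
  component I R_P <inter> R = {f. <exists>s <notin> P. s f <in> I}. *)
definition primary_component :: "('v, 'k::field) mpoly set \<Rightarrow> ('v, 'k) mpoly set \<Rightarrow> ('v, 'k) mpoly set" where
  "primary_component I P = {f. \<exists>s. s \<notin> P \<and> s * f \<in> I}"

definition comp_F :: "('v, 'k::field) mpoly set \<Rightarrow> 'v set \<Rightarrow> ('v, 'k) mpoly set" where
  "comp_F I F = primary_component I (P_ideal F)"

definition Gset :: "('v \<Rightarrow> int) \<Rightarrow> 'v set" where
  "Gset a = {i. a i < 0}"

definition pos_part :: "('v::finite \<Rightarrow> int) \<Rightarrow> ('v \<Rightarrow>\<^sub>0 nat)" where
  "pos_part a = Abs_poly_mapping (\<lambda>i. nat (a i))"

(* Membership of the Laurent monomial x^a in I R_F, R_F = R[x_i^{-1} | i <in> F]: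
  elements of I R_F are f / x^c with f <in> I and c supported on F, so x^a <in> I R_F iff
  x^(a+c) <in> I for some such c with a + c <ge> 0. *)
definition lmon_in_loc :: "('v::finite, 'k::field) mpoly set \<Rightarrow> 'v set \<Rightarrow> ('v \<Rightarrow> int) \<Rightarrow> bool" where
  "lmon_in_loc I F a \<longleftrightarrow> (\<exists>c :: 'v \<Rightarrow>\<^sub>0 nat. Poly_Mapping.keys c \<subseteq> F \<and>
      (\<forall>i. 0 \<le> a i + int (Poly_Mapping.lookup c i)) \<and>
      mon (Abs_poly_mapping (\<lambda>i. nat (a i + int (Poly_Mapping.lookup c i)))) \<in> I)"

definition degree_complex :: "('v::finite, 'k::field) mpoly set \<Rightarrow> ('v \<Rightarrow> int) \<Rightarrow> 'v set set" where
  "degree_complex I a = {F - Gset a | F. Gset a \<subseteq> F \<and> \<not> lmon_in_loc I F a}"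

definition facet :: "'v set set \<Rightarrow> 'v set \<Rightarrow> bool" where
  "facet \<Delta> G \<longleftrightarrow> G \<in> \<Delta> \<and> (\<forall>H\<in>\<Delta>. G \<subseteq> H \<longrightarrow> H = G)"

end

theory Submission imports Defs begin

definition Mset :: "('v \<Rightarrow>\<^sub>0 nat) set \<Rightarrow> ('v \<Rightarrow>\<^sub>0 nat) set" where
  "Mset E = {m. \<exists>e\<in>E. \<exists>d. m = e + d}"

lemma Mset_up: "m \<in> Mset E \<Longrightarrow> d + m \<in> Mset E"
  unfolding Mset_def by (auto simp: ac_simps) (metis add.assoc add.commute)

lemma keys_mon[simp]: "Poly_Mapping.keys (mon e :: ('v,'k::field) mpoly) = {e}"
  by (simp add: mon_def)

lemma is_ideal_keys: "is_ideal {f::('v,'k::field) mpoly. Poly_Mapping.keys f \<subseteq> Mset E}"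
  unfolding is_ideal_def
proof (intro conjI ballI allI)
  fix f g :: "('v,'k) mpoly"
  assume "f \<in> {f. Poly_Mapping.keys f \<subseteq> Mset E}" "g \<in> {f. Poly_Mapping.keys f \<subseteq> Mset E}"
  then show "f + g \<in> {f. Poly_Mapping.keys f \<subseteq> Mset E}" using keys_add[of f g] by auto
next
  fix r f :: "('v,'k) mpoly"
  assume "f \<in> {f. Poly_Mapping.keys f \<subseteq> Mset E}"
  then show "r * f \<in> {f. Poly_Mapping.keys f \<subseteq> Mset E}" using keys_mult[of r f] Mset_up by fastforce
qed simp

lemma ideal_sum: assumes "is_ideal K" "finite A" "\<And>x. x \<in> A \<Longrightarrow> g x \<in> K" shows "sum g A \<in> K"
  using assms(2,3) by (induction A rule: finite_induct) (use assms(1) in \<open>auto simp: is_ideal_def\<close>)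

lemma poly_sum_monomials: "(\<Sum>m\<in>Poly_Mapping.keys f. Poly_Mapping.single m (Poly_Mapping.lookup f m)) = f"
proof (rule poly_mapping_eqI)
  fix k
  have "(\<Sum>m\<in>Poly_Mapping.keys f. Poly_Mapping.lookup (Poly_Mapping.single m (Poly_Mapping.lookup f m)) k)
     = (\<Sum>m\<in>Poly_Mapping.keys f. if m = k then Poly_Mapping.lookup f m else 0)"
    by (rule sum.cong) (auto simp: lookup_single when_def)
  also have "\<dots> = Poly_Mapping.lookup f k" by (simp add: in_keys_iff)
  finally show "Poly_Mapping.lookup (\<Sum>m\<in>Poly_Mapping.keys f. Poly_Mapping.single m (Poly_Mapping.lookup f m)) k = Poly_Mapping.lookup f k"
    by (simp add: lookup_sum)
qed

lemma ideal_gen_mon: "ideal_gen (mon ` E) = {f::('v,'k::field) mpoly. Poly_Mapping.keys f \<subseteq> Mset E}"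
proof
  show "ideal_gen (mon ` E) \<subseteq> {f::('v,'k::field) mpoly. Poly_Mapping.keys f \<subseteq> Mset E}"
    unfolding ideal_gen_def
  proof (rule Inter_lower, safe)
    show "is_ideal {f::('v,'k::field) mpoly. Poly_Mapping.keys f \<subseteq> Mset E}" by (rule is_ideal_keys)
  next
    fix e x assume "e \<in> E" "x \<in> Poly_Mapping.keys (mon e :: ('v,'k) mpoly)"
    then show "x \<in> Mset E" unfolding Mset_def by (auto intro!: bexI[of _ e] exI[of _ 0])
  qed
next
  show "{f::('v,'k::field) mpoly. Poly_Mapping.keys f \<subseteq> Mset E} \<subseteq> ideal_gen (mon ` E)"
  proof (clarsimp simp: ideal_gen_def)
    fix f :: "('v,'k) mpoly" and K :: "('v,'k) mpoly set"
    assume f: "Poly_Mapping.keys f \<subseteq> Mset E" and K: "is_ideal K" "mon ` E \<subseteq> K"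
    have "(\<Sum>m\<in>Poly_Mapping.keys f. Poly_Mapping.single m (Poly_Mapping.lookup f m)) \<in> K"
    proof (rule ideal_sum[OF K(1)], simp)
      fix m assume "m \<in> Poly_Mapping.keys f"
      with f obtain e d where "e \<in> E" "m = e + d" by (auto simp: Mset_def)
      then have "Poly_Mapping.single m (Poly_Mapping.lookup f m) = Poly_Mapping.single d (Poly_Mapping.lookup f m) * mon e"
        by (simp add: mon_def mult_single add.commute)
      moreover have "mon e \<in> K" using K(2) \<open>e \<in> E\<close> by auto
      ultimately show "Poly_Mapping.single m (Poly_Mapping.lookup f m) \<in> K" using K(1) by (simp add: is_ideal_def)
    qed
    then show "f \<in> K" by (simp add: poly_sum_monomials)
  qed
qed


lemma nozd:
  fixes f g :: "('v::finite,'k::field) mpoly"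
  assumes "f \<noteq> 0" "g \<noteq> 0" shows "f * g \<noteq> 0"
proof -
  obtain \<iota> :: "'v \<Rightarrow> nat" and n where "\<iota> ` UNIV = {i. i < n}" "inj \<iota>"
    using finite_imp_inj_to_nat_seg[OF finite_UNIV] by blast
  define h :: "('v \<Rightarrow>\<^sub>0 nat) \<Rightarrow> (nat \<Rightarrow>\<^sub>0 nat)" where
    "h m = Abs_poly_mapping (\<lambda>n. if n \<in> range \<iota> then Poly_Mapping.lookup m (inv \<iota> n) else 0)" for m
  have lh: "Poly_Mapping.lookup (h m) n = (if n \<in> range \<iota> then Poly_Mapping.lookup m (inv \<iota> n) else 0)" for m n
  proof -
    have "finite {n. (if n \<in> range \<iota> then Poly_Mapping.lookup m (inv \<iota> n) else 0) \<noteq> 0}"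
      by (rule finite_subset[of _ "range \<iota>"]) (auto split: if_splits)
    then show ?thesis unfolding h_def by simp
  qed
  have h_add: "h (x + y) = h x + h y" for x y
    by (rule poly_mapping_eqI) (simp add: lh lookup_add)
  have h_inj: "x = y" if "h x = h y" for x y
  proof (rule poly_mapping_eqI)
    fix v
    have "Poly_Mapping.lookup (h x) (\<iota> v) = Poly_Mapping.lookup (h y) (\<iota> v)" using that by simp
    then show "Poly_Mapping.lookup x v = Poly_Mapping.lookup y v" using \<open>inj \<iota>\<close> by (simp add: lh)
  qed
  have ex_max: "\<exists>a\<in>Poly_Mapping.keys p. \<forall>l\<in>Poly_Mapping.keys p. h l \<le> h a" if "p \<noteq> 0" for p :: "('v,'k) mpoly"
  proof -
    have ne: "Poly_Mapping.keys p \<noteq> {}" using that by auto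
    have "Max (h ` Poly_Mapping.keys p) \<in> h ` Poly_Mapping.keys p" using ne by (intro Max_in) auto
    then obtain a where a: "a \<in> Poly_Mapping.keys p" "h a = Max (h ` Poly_Mapping.keys p)" by auto
    then show ?thesis by (intro bexI[OF _ a(1)]) auto
  qed
  obtain a where a: "a \<in> Poly_Mapping.keys f" "\<forall>l\<in>Poly_Mapping.keys f. h l \<le> h a" using ex_max[OF assms(1)] by blast
  obtain b where b: "b \<in> Poly_Mapping.keys g" "\<forall>l\<in>Poly_Mapping.keys g. h l \<le> h b" using ex_max[OF assms(2)] by blast
  have fun_eq: "(\<lambda>l. Poly_Mapping.lookup f l * (\<Sum>q. Poly_Mapping.lookup g q when a + b = l + q))
      = (\<lambda>l. if l = a then Poly_Mapping.lookup f a * Poly_Mapping.lookup g b else 0)"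
  proof
    fix l
    show "Poly_Mapping.lookup f l * (\<Sum>q. Poly_Mapping.lookup g q when a + b = l + q)
      = (if l = a then Poly_Mapping.lookup f a * Poly_Mapping.lookup g b else 0)"
    proof (cases "l = a")
      case True
      have "(\<lambda>q. Poly_Mapping.lookup g q when a + b = a + q) = (\<lambda>q. if q = b then Poly_Mapping.lookup g q else 0)"
        by (auto simp: when_def)
      then show ?thesis using True by simp
    next
      case False
      show ?thesis
      proof (cases "l \<in> Poly_Mapping.keys f")
        case False
        then show ?thesis using \<open>l \<noteq> a\<close> by (simp add: in_keys_iff)
      next
        case True
        have hl: "h l < h a" using a(2) True \<open>l \<noteq> a\<close> h_inj by (metis order_le_less)
        have "(\<lambda>q. Poly_Mapping.lookup g q when a + b = l + q) = (\<lambda>q. 0)"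
        proof
          fix q
          show "(Poly_Mapping.lookup g q when a + b = l + q) = 0"
          proof (cases "Poly_Mapping.lookup g q = 0")
            case False
            then have "h q \<le> h b" using b(2) by (simp add: in_keys_iff)
            then have "h l + h q < h a + h b" using hl by (simp add: add_less_le_mono)
            then have "a + b \<noteq> l + q" by (metis h_add less_irrefl)
            then show ?thesis by (simp add: when_def)
          qed simp
        qed
        then show ?thesis using \<open>l \<noteq> a\<close> by (metis Sum_any.neutral mult_zero_right)
      qed
    qed
  qed
  have "Poly_Mapping.lookup (f * g) (a + b) = Poly_Mapping.lookup f a * Poly_Mapping.lookup g b"
    unfolding lookup_mult fun_eq by simp
  also have "\<dots> \<noteq> 0" using a(1) b(1) by (simp add: in_keys_iff)
  finally show ?thesis by auto
qed


lemma Mset_var: "m \<in> Mset ((\<lambda>i. Poly_Mapping.single i 1) ` (-F)) \<longleftrightarrow> \<not> Poly_Mapping.keys m \<subseteq> F"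
proof
  assume "m \<in> Mset ((\<lambda>i. Poly_Mapping.single i (1::nat)) ` (-F))"
  then obtain i d where "i \<notin> F" "m = Poly_Mapping.single i 1 + d" by (auto simp: Mset_def)
  then have "i \<in> Poly_Mapping.keys m" by (simp add: in_keys_iff lookup_add)
  with \<open>i \<notin> F\<close> show "\<not> Poly_Mapping.keys m \<subseteq> F" by auto
next
  assume "\<not> Poly_Mapping.keys m \<subseteq> F"
  then obtain i where i: "i \<in> Poly_Mapping.keys m" "i \<notin> F" by auto
  have "m = Poly_Mapping.single i 1 + (m - Poly_Mapping.single i 1)"
    using i(1) by (intro poly_mapping_eqI) (auto simp: lookup_add lookup_minus lookup_single when_def in_keys_iff)
  then show "m \<in> Mset ((\<lambda>i. Poly_Mapping.single i (1::nat)) ` (-F))" using i(2) unfolding Mset_def by blast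
qed

lemma P_eq: "P_ideal F = {f::('v,'k::field) mpoly. Poly_Mapping.keys f \<subseteq> Mset ((\<lambda>i. Poly_Mapping.single i 1) ` (-F))}"
proof -
  have "var ` (-F) = (mon ` ((\<lambda>i. Poly_Mapping.single i 1) ` (-F)) :: ('v,'k) mpoly set)"
    by (auto simp: var_def)
  then show ?thesis unfolding P_ideal_def by (simp add: ideal_gen_mon)
qed

lemma P_char: "P_ideal F = {f::('v,'k::field) mpoly. \<forall>m\<in>Poly_Mapping.keys f. \<not> Poly_Mapping.keys m \<subseteq> F}"
  unfolding P_eq using Mset_var by blast

lemma P_is_ideal: "is_ideal (P_ideal F :: ('v,'k::field) mpoly set)"
  unfolding P_eq by (rule is_ideal_keys)

lemma ideal_diff: "is_ideal K \<Longrightarrow> x \<in> K \<Longrightarrow> y \<in> K \<Longrightarrow> x - (y::('v,'k::field) mpoly) \<in> K"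
  unfolding is_ideal_def by (metis diff_conv_add_uminus mult_minus1)

lemma P_prime: "is_prime_ideal (P_ideal F :: ('v::finite,'k::field) mpoly set)"
  unfolding is_prime_ideal_def
proof (intro conjI allI impI)
  show "is_ideal (P_ideal F :: ('v,'k) mpoly set)" by (rule P_is_ideal)
  have "(1::('v,'k) mpoly) \<notin> P_ideal F" by (simp add: P_char)
  then show "P_ideal F \<noteq> (UNIV :: ('v,'k) mpoly set)" by auto
next
  fix f g :: "('v,'k) mpoly"
  assume fg: "f * g \<in> P_ideal F"
  define rp :: "('v,'k) mpoly \<Rightarrow> ('v,'k) mpoly" where
    "rp p = Abs_poly_mapping (\<lambda>m. if Poly_Mapping.keys m \<subseteq> F then Poly_Mapping.lookup p m else 0)" for p
  have lrp: "Poly_Mapping.lookup (rp p) m = (if Poly_Mapping.keys m \<subseteq> F then Poly_Mapping.lookup p m else 0)" for p m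
  proof -
    have "finite {m. (if Poly_Mapping.keys m \<subseteq> F then Poly_Mapping.lookup p m else 0) \<noteq> 0}"
      by (rule finite_subset[of _ "Poly_Mapping.keys p"]) (auto simp: in_keys_iff split: if_splits)
    then show ?thesis unfolding rp_def by simp
  qed
  have rest: "p - rp p \<in> P_ideal F" for p
    by (auto simp: P_char in_keys_iff lookup_minus lrp)
  have nz: "rp p \<noteq> 0" if "p \<notin> P_ideal F" for p
  proof
    assume "rp p = 0"
    then have "p - rp p = p" by simp
    with rest[of p] that show False by simp
  qed
  have krp: "Poly_Mapping.keys (rp p) \<subseteq> {m. Poly_Mapping.keys m \<subseteq> F}" for p
  proof
    fix m assume "m \<in> Poly_Mapping.keys (rp p)"
    then have "Poly_Mapping.lookup (rp p) m \<noteq> 0" by (simp add: in_keys_iff)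
    then show "m \<in> {m. Poly_Mapping.keys m \<subseteq> F}" by (simp add: lrp split: if_splits)
  qed
  have eq: "rp f * rp g = f * g - (rp f * (g - rp g) + (f - rp f) * g)"
    by (simp add: algebra_simps)
  have I: "is_ideal (P_ideal F :: ('v,'k) mpoly set)" by (rule P_is_ideal)
  have "rp f * (g - rp g) \<in> P_ideal F" using I rest[of g] by (simp add: is_ideal_def)
  moreover have "(f - rp f) * g \<in> P_ideal F" using I rest[of f] by (simp add: is_ideal_def mult.commute[of _ g])
  ultimately have "rp f * (g - rp g) + (f - rp f) * g \<in> P_ideal F" using I by (simp add: is_ideal_def)
  then have inP: "rp f * rp g \<in> P_ideal F" unfolding eq using ideal_diff[OF I fg] by blast
  have "Poly_Mapping.keys (rp f * rp g) \<subseteq> {m. Poly_Mapping.keys m \<subseteq> F}"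
  proof
    fix m assume "m \<in> Poly_Mapping.keys (rp f * rp g)"
    then obtain x y where "m = x + y" "x \<in> Poly_Mapping.keys (rp f)" "y \<in> Poly_Mapping.keys (rp g)"
      using keys_mult by blast
    then show "m \<in> {m. Poly_Mapping.keys m \<subseteq> F}" using krp keys_add[of x y] by blast
  qed
  with inP have "Poly_Mapping.keys (rp f * rp g) = {}" unfolding P_char by blast
  then have "rp f * rp g = 0" by simp
  then show "f \<in> P_ideal F \<or> g \<in> P_ideal F" using nz nozd by blast
qed

lemma lookup_mult_mon: "Poly_Mapping.lookup (s * mon u) (m + u) = Poly_Mapping.lookup (s::('v,'k::field) mpoly) m"
proof -
  have inner: "(\<Sum>q. Poly_Mapping.lookup (mon u :: ('v,'k) mpoly) q when m + u = l + q) = (if l = m then 1 else 0)" for l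
  proof -
    have "(\<Sum>q. Poly_Mapping.lookup (mon u :: ('v,'k) mpoly) q when m + u = l + q) = (\<Sum>q. if q = u then (if l = m then 1 else 0) else 0)"
      by (rule Sum_any.cong) (auto simp: mon_def lookup_single when_def)
    then show ?thesis by simp
  qed
  have "(\<lambda>l. Poly_Mapping.lookup s l * (\<Sum>q. Poly_Mapping.lookup (mon u :: ('v,'k) mpoly) q when m + u = l + q))
     = (\<lambda>l. if l = m then Poly_Mapping.lookup s l else 0)"
    by (auto simp: inner)
  note eq = this
  show ?thesis unfolding lookup_mult eq by simp
qed

lemma keys_mult_mon: "Poly_Mapping.keys (s * mon u) \<subseteq> (\<lambda>m. m + u) ` Poly_Mapping.keys (s::('v,'k::field) mpoly)"
  using keys_mult[of s "mon u"] by auto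


definition locM :: "('v \<Rightarrow>\<^sub>0 nat) set \<Rightarrow> 'v set \<Rightarrow> ('v \<Rightarrow>\<^sub>0 nat) \<Rightarrow> bool" where
  "locM M F b \<longleftrightarrow> (\<exists>c. Poly_Mapping.keys c \<subseteq> F \<and> b + c \<in> M)"

lemma Mset_le: "x \<in> Mset E \<Longrightarrow> (\<And>j. Poly_Mapping.lookup x j \<le> Poly_Mapping.lookup y j) \<Longrightarrow> y \<in> Mset E"
proof -
  assume x: "x \<in> Mset E" and le: "\<And>j. Poly_Mapping.lookup x j \<le> Poly_Mapping.lookup y j"
  have "y = (y - x) + x" using le by (intro poly_mapping_eqI) (simp add: lookup_add lookup_minus)
  then show ?thesis using Mset_up[OF x, of "y - x"] by simp
qed

lemma lookup_Abs_fin: "Poly_Mapping.lookup (Abs_poly_mapping (f :: 'v::finite \<Rightarrow> 'b::zero)) = f"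
  by simp

lemma mon_in: "Poly_Mapping.keys (mon x :: ('v,'k::field) mpoly) \<subseteq> M \<longleftrightarrow> x \<in> M"
  by simp

lemma D_lemma:
  fixes a :: "'v::finite \<Rightarrow> int"
  assumes I: "I = {f::('v,'k::field) mpoly. Poly_Mapping.keys f \<subseteq> Mset E}" and G: "Gset a \<subseteq> F"
  shows "lmon_in_loc I F a \<longleftrightarrow> locM (Mset E) F (pos_part a)"
proof
  assume "lmon_in_loc I F a"
  then obtain c where c: "Poly_Mapping.keys c \<subseteq> F" "\<forall>i. 0 \<le> a i + int (Poly_Mapping.lookup c i)"
    "mon (Abs_poly_mapping (\<lambda>i. nat (a i + int (Poly_Mapping.lookup c i)))) \<in> I"
    unfolding lmon_in_loc_def by blast
  define v :: "'v \<Rightarrow>\<^sub>0 nat" where "v = Abs_poly_mapping (\<lambda>i. nat (a i + int (Poly_Mapping.lookup c i)))"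
  define d :: "'v \<Rightarrow>\<^sub>0 nat" where "d = Abs_poly_mapping (\<lambda>i. nat (a i + int (Poly_Mapping.lookup c i)) - nat (a i))"
  have vM: "v \<in> Mset E" using c(3) I unfolding v_def by simp
  have "v = pos_part a + d"
    using c(2) by (intro poly_mapping_eqI) (auto simp: v_def d_def pos_part_def lookup_add)
  moreover have "Poly_Mapping.keys d \<subseteq> F"
  proof
    fix i assume "i \<in> Poly_Mapping.keys d"
    then have "nat (a i + int (Poly_Mapping.lookup c i)) - nat (a i) \<noteq> 0" by (simp add: d_def in_keys_iff)
    then have "Poly_Mapping.lookup c i \<noteq> 0 \<or> a i < 0" by auto
    then show "i \<in> F" using c(1) G by (auto simp: in_keys_iff Gset_def)
  qed
  ultimately show "locM (Mset E) F (pos_part a)" using vM unfolding locM_def by auto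
next
  assume "locM (Mset E) F (pos_part a)"
  then obtain c where c: "Poly_Mapping.keys c \<subseteq> F" "pos_part a + c \<in> Mset E" unfolding locM_def by blast
  define c' :: "'v \<Rightarrow>\<^sub>0 nat" where "c' = Abs_poly_mapping (\<lambda>i. Poly_Mapping.lookup c i + nat (- a i))"
  have k: "Poly_Mapping.keys c' \<subseteq> F"
  proof
    fix i assume "i \<in> Poly_Mapping.keys c'"
    then have "Poly_Mapping.lookup c i \<noteq> 0 \<or> a i < 0" by (auto simp: c'_def in_keys_iff)
    then show "i \<in> F" using c(1) G by (auto simp: in_keys_iff Gset_def)
  qed
  have nn: "\<forall>i. 0 \<le> a i + int (Poly_Mapping.lookup c' i)" by (auto simp: c'_def)
  have "Abs_poly_mapping (\<lambda>i. nat (a i + int (Poly_Mapping.lookup c' i))) = pos_part a + c"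
    by (intro poly_mapping_eqI) (auto simp: c'_def pos_part_def lookup_add)
  then have "mon (Abs_poly_mapping (\<lambda>i. nat (a i + int (Poly_Mapping.lookup c' i)))) \<in> I"
    using c(2) I by simp
  then show "lmon_in_loc I F a" unfolding lmon_in_loc_def using k nn by blast
qed

lemma E_lemma:
  assumes I: "I = {f::('v::finite,'k::field) mpoly. Poly_Mapping.keys f \<subseteq> Mset E}"
  shows "mon b \<in> comp_F I F \<longleftrightarrow> locM (Mset E) F b"
proof
  assume "mon b \<in> comp_F I F"
  then obtain s where s: "s \<notin> P_ideal F" "s * mon b \<in> I" unfolding comp_F_def primary_component_def by blast
  then obtain m where m: "m \<in> Poly_Mapping.keys s" "Poly_Mapping.keys m \<subseteq> F" by (auto simp: P_char)
  have "m + b \<in> Poly_Mapping.keys (s * mon b)" using m(1) by (simp add: in_keys_iff lookup_mult_mon)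
  then have "m + b \<in> Mset E" using s(2) I by auto
  then show "locM (Mset E) F b" unfolding locM_def using m(2) by (auto simp: add.commute)
next
  assume "locM (Mset E) F b"
  then obtain c where c: "Poly_Mapping.keys c \<subseteq> F" "b + c \<in> Mset E" unfolding locM_def by blast
  have "mon c \<notin> (P_ideal F :: ('v,'k) mpoly set)" using c(1) by (simp add: P_char)
  moreover have "mon c * mon b \<in> I" using c(2) I by (simp add: mon_def mult_single add.commute)
  ultimately show "mon b \<in> comp_F I F" unfolding comp_F_def primary_component_def by blast
qed


theorem proposition1p6:
  fixes I :: "('v::finite, 'k::field) mpoly set"
    and a :: "'v \<Rightarrow> int"
    and F :: "'v set"
  assumes "monomial_ideal I"
    and "unmixed I"
    and "Gset a \<subseteq> F"
  shows "facet (degree_complex I a) (F - Gset a) \<longleftrightarrow>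
         F \<in> Fam I \<and> mon (pos_part a) \<notin> comp_F I F"
proof -
  obtain E where IE: "I = ideal_gen (mon ` E)" using assms(1) unfolding monomial_ideal_def by blast
  define M where "M = Mset E"
  have I: "I = {f::('v,'k) mpoly. Poly_Mapping.keys f \<subseteq> Mset E}" using IE by (simp add: ideal_gen_mon)
  define b where "b = pos_part a"
  define G where "G = Gset a"
  have GF: "G \<subseteq> F" using assms(3) G_def by simp
  have Delta: "H \<in> degree_complex I a \<longleftrightarrow> (\<exists>F'. H = F' - G \<and> G \<subseteq> F' \<and> \<not> locM M F' b)" for H
    unfolding degree_complex_def G_def M_def b_def using D_lemma[OF I] by blast
  have sub: "F1 - G \<subseteq> F2 - G \<longleftrightarrow> F1 \<subseteq> F2" if "G \<subseteq> F1" "G \<subseteq> F2" for F1 F2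
    using that by blast
  have seq: "F1 - G = F2 - G \<longleftrightarrow> F1 = F2" if "G \<subseteq> F1" "G \<subseteq> F2" for F1 F2
    using that by blast
  have IsubP: "I \<subseteq> P_ideal F'" if "\<not> locM M F' b" for F'
  proof
    fix f assume "f \<in> I"
    show "f \<in> P_ideal F'"
    proof (clarsimp simp: P_char)
      fix m assume "m \<in> Poly_Mapping.keys f" "Poly_Mapping.keys m \<subseteq> F'"
      moreover have "m \<in> M" using \<open>f \<in> I\<close> \<open>m \<in> Poly_Mapping.keys f\<close> I M_def by auto
      ultimately have "locM M F' b" unfolding locM_def M_def using Mset_up[of m E b] by (auto simp: add.commute)
      then show False using that by simp
    qed
  qed
  define maxF where "maxF \<longleftrightarrow> (\<forall>F'. G \<subseteq> F' \<longrightarrow> F \<subseteq> F' \<longrightarrow> \<not> locM M F' b \<longrightarrow> F' = F)"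
  have facet_iff: "facet (degree_complex I a) (F - G) \<longleftrightarrow> \<not> locM M F b \<and> maxF"
  proof
    assume fc: "facet (degree_complex I a) (F - G)"
    then obtain F0 where F0: "F - G = F0 - G" "G \<subseteq> F0" "\<not> locM M F0 b"
      unfolding facet_def Delta by blast
    then have "F0 = F" using seq GF by blast
    with F0 have nl: "\<not> locM M F b" by simp
    have "maxF" unfolding maxF_def
    proof (intro allI impI)
      fix F' assume "G \<subseteq> F'" "F \<subseteq> F'" "\<not> locM M F' b"
      then have "F' - G \<in> degree_complex I a" unfolding Delta by blast
      moreover have "F - G \<subseteq> F' - G" using \<open>F \<subseteq> F'\<close> by blast
      ultimately have "F' - G = F - G" using fc unfolding facet_def by blast
      then show "F' = F" using seq GF \<open>G \<subseteq> F'\<close> by blast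
    qed
    with nl show "\<not> locM M F b \<and> maxF" by simp
  next
    assume h: "\<not> locM M F b \<and> maxF"
    show "facet (degree_complex I a) (F - G)" unfolding facet_def
    proof (intro conjI ballI impI)
      show "F - G \<in> degree_complex I a" unfolding Delta using h GF by blast
    next
      fix H assume "H \<in> degree_complex I a" "F - G \<subseteq> H"
      then obtain F' where F': "H = F' - G" "G \<subseteq> F'" "\<not> locM M F' b" unfolding Delta by blast
      then have "F \<subseteq> F'" using sub GF \<open>F - G \<subseteq> H\<close> by blast
      then have "F' = F" using h F' unfolding maxF_def by blast
      then show "H = F - G" using F' by simp
    qed
  qed
  have E': "mon b \<in> comp_F I F \<longleftrightarrow> locM M F b" using E_lemma[OF I] M_def by simp
  have main: "(\<not> locM M F b \<and> maxF) \<longleftrightarrow> (F \<in> Fam I \<and> \<not> locM M F b)"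
  proof
    assume h: "F \<in> Fam I \<and> \<not> locM M F b"
    then have mp: "minimal_prime I (P_ideal F)" by (simp add: Fam_def)
    have "maxF" unfolding maxF_def
    proof (intro allI impI)
      fix F' assume F': "G \<subseteq> F'" "F \<subseteq> F'" "\<not> locM M F' b"
      show "F' = F"
      proof (rule ccontr)
        assume "F' \<noteq> F"
        then obtain i where i: "i \<in> F'" "i \<notin> F" using F'(2) by blast
        have "P_ideal F' \<subseteq> (P_ideal F :: ('v,'k) mpoly set)" using F'(2) by (auto simp: P_char)
        then have "P_ideal F' = (P_ideal F :: ('v,'k) mpoly set)"
          using mp IsubP[OF F'(3)] P_prime unfolding minimal_prime_def by blast
        moreover have "var i \<in> (P_ideal F :: ('v,'k) mpoly set)" using i by (simp add: P_char var_def)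
        moreover have "var i \<notin> (P_ideal F' :: ('v,'k) mpoly set)" using i by (simp add: P_char var_def)
        ultimately show False by simp
      qed
    qed
    with h show "\<not> locM M F b \<and> maxF" by simp
  next
    assume h: "\<not> locM M F b \<and> maxF"
    have ins: "\<exists>c. Poly_Mapping.keys c \<subseteq> insert i F \<and> b + c \<in> M" if "i \<notin> F" for i
    proof -
      have "locM M (insert i F) b" using h that GF unfolding maxF_def by blast
      then show ?thesis unfolding locM_def .
    qed
    then obtain c where c: "\<And>i. i \<notin> F \<Longrightarrow> Poly_Mapping.keys (c i) \<subseteq> insert i F \<and> b + c i \<in> M"
      by metis
    define N where "N = (\<Sum>i\<in>-F. Poly_Mapping.lookup (c i) i)"
    define W where "W = {w. Poly_Mapping.keys w \<subseteq> -F \<and> \<not> locM M F (b + w)}"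
    define sz where "sz w = (\<Sum>j\<in>UNIV. Poly_Mapping.lookup w j)" for w :: "'v \<Rightarrow>\<^sub>0 nat"
    have bnd: "Poly_Mapping.lookup w j \<le> N" if "w \<in> W" for w j
    proof (rule ccontr)
      assume "\<not> Poly_Mapping.lookup w j \<le> N"
      then have wj: "Poly_Mapping.lookup w j > N" by simp
      have jF: "j \<notin> F"
      proof
        assume "j \<in> F"
        then have "j \<notin> Poly_Mapping.keys w" using that unfolding W_def by auto
        then show False using wj by (simp add: in_keys_iff)
      qed
      have "Poly_Mapping.lookup (c j) j \<le> N" unfolding N_def using jF by (intro member_le_sum) auto
      define c' :: "'v \<Rightarrow>\<^sub>0 nat" where "c' = Abs_poly_mapping (\<lambda>k. if k \<in> F then Poly_Mapping.lookup (c j) k else 0)"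
      have kc': "Poly_Mapping.keys c' \<subseteq> F" by (auto simp: c'_def in_keys_iff split: if_splits)
      have "b + w + c' \<in> M" unfolding M_def
      proof (rule Mset_le)
        show "b + c j \<in> Mset E" using c[OF jF] M_def by simp
      next
        fix k
        show "Poly_Mapping.lookup (b + c j) k \<le> Poly_Mapping.lookup (b + w + c') k"
        proof (cases "k \<in> F")
          case False
          then show ?thesis
          proof (cases "k = j")
            case True then show ?thesis using wj \<open>Poly_Mapping.lookup (c j) j \<le> N\<close>
              by (simp add: lookup_add c'_def)
          next
            case False
            then have "Poly_Mapping.lookup (c j) k = 0" using c[OF jF] \<open>k \<notin> F\<close> by (auto simp: in_keys_iff)
            then show ?thesis by (simp add: lookup_add)
          qed
        qed (simp add: lookup_add c'_def)
      qed
      then have "locM M F (b + w)" unfolding locM_def using kc' by (auto simp: add.assoc)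
      then show False using that unfolding W_def by simp
    qed
    have "0 \<in> W" using h unfolding W_def by simp
    moreover have "\<forall>w. w \<in> W \<longrightarrow> sz w < card (UNIV :: 'v set) * N + 1"
    proof (intro allI impI)
      fix w assume "w \<in> W"
      have "sz w \<le> card (UNIV :: 'v set) * N" unfolding sz_def
        using sum_bounded_above[of UNIV "\<lambda>j. Poly_Mapping.lookup w j" N] bnd[OF \<open>w \<in> W\<close>] by simp
      then show "sz w < card (UNIV :: 'v set) * N + 1" by simp
    qed
    ultimately obtain w where w: "w \<in> W" "\<And>y. y \<in> W \<Longrightarrow> sz y \<le> sz w"
      using ex_has_greatest_nat[of "\<lambda>w. w \<in> W" 0 sz] by blast
    have step: "locM M F (b + (w + Poly_Mapping.single i 1))" if "i \<notin> F" for i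
    proof (rule ccontr)
      assume nl: "\<not> locM M F (b + (w + Poly_Mapping.single i 1))"
      have "Poly_Mapping.keys (w + Poly_Mapping.single i 1) \<subseteq> -F"
        using keys_add[of w "Poly_Mapping.single i (1::nat)"] w(1) that unfolding W_def by auto
      with nl have "w + Poly_Mapping.single i 1 \<in> W" unfolding W_def by simp
      then have "sz (w + Poly_Mapping.single i 1) \<le> sz w" by (rule w(2))
      moreover have "sz (w + Poly_Mapping.single i 1) = sz w + 1"
        unfolding sz_def by (simp add: lookup_add sum.distrib lookup_single when_def)
      ultimately show False by simp
    qed
    then obtain c2 where c2: "\<And>i. i \<notin> F \<Longrightarrow> Poly_Mapping.keys (c2 i) \<subseteq> F \<and> b + (w + Poly_Mapping.single i 1) + c2 i \<in> M"
      unfolding locM_def by metis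
    define C where "C = (\<Sum>i\<in>-F. c2 i)"
    have kC: "Poly_Mapping.keys C \<subseteq> F" unfolding C_def using keys_sum[of c2 "-F"] c2 by blast
    define u where "u = b + w + C"
    have "P_ideal F = {g. g * mon u \<in> I}"
    proof (intro equalityI subsetI)
      fix g :: "('v,'k) mpoly" assume g: "g \<in> P_ideal F"
      have "Poly_Mapping.keys (g * mon u) \<subseteq> M"
      proof
        fix k assume "k \<in> Poly_Mapping.keys (g * mon u)"
        then obtain m where m: "m \<in> Poly_Mapping.keys g" "k = m + u" using keys_mult_mon by blast
        then obtain i where i: "i \<in> Poly_Mapping.keys m" "i \<notin> F" using g by (auto simp: P_char)
        show "k \<in> M" unfolding M_def
        proof (rule Mset_le)
          show "b + (w + Poly_Mapping.single i 1) + c2 i \<in> Mset E" using c2[OF i(2)] M_def by simp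
        next
          fix j
          have "Poly_Mapping.lookup (c2 i) j \<le> Poly_Mapping.lookup C j"
            unfolding C_def lookup_sum using i(2) by (intro member_le_sum) auto
          moreover have "Poly_Mapping.lookup (Poly_Mapping.single i 1) j \<le> Poly_Mapping.lookup m j"
            using i(1) by (auto simp: lookup_single when_def in_keys_iff)
          ultimately show "Poly_Mapping.lookup (b + (w + Poly_Mapping.single i 1) + c2 i) j \<le> Poly_Mapping.lookup k j"
            unfolding m(2) u_def by (simp add: lookup_add)
        qed
      qed
      then show "g \<in> {g. g * mon u \<in> I}" using I M_def by simp
    next
      fix g :: "('v,'k) mpoly" assume "g \<in> {g. g * mon u \<in> I}"
      then have gI: "g * mon u \<in> I" by simp
      show "g \<in> P_ideal F"
      proof (rule ccontr)
        assume "g \<notin> P_ideal F"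
        then obtain m where m: "m \<in> Poly_Mapping.keys g" "Poly_Mapping.keys m \<subseteq> F" by (auto simp: P_char)
        have "m + u \<in> Poly_Mapping.keys (g * mon u)" using m(1) by (simp add: in_keys_iff lookup_mult_mon)
        then have "m + u \<in> M" using gI I M_def by auto
        moreover have "m + u = (b + w) + (C + m)" unfolding u_def by (simp add: ac_simps)
        moreover have "Poly_Mapping.keys (C + m) \<subseteq> F" using keys_add[of C m] kC m(2) by blast
        ultimately have "locM M F (b + w)" unfolding locM_def by metis
        then show False using w(1) unfolding W_def by simp
      qed
    qed
    then have "associated_prime I (P_ideal F)" unfolding associated_prime_def using P_prime by blast
    then have "minimal_prime I (P_ideal F)" using assms(2) unfolding unmixed_def by blast
    then show "F \<in> Fam I \<and> \<not> locM M F b" using h by (simp add: Fam_def)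
  qed
  show ?thesis using facet_iff main E' unfolding G_def b_def by simp
qed

end
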